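(* Let $A,A^*$ be a Leonard pair in $\mathcal A$. Then there exists a unique antiautomorphism $\dagger$ of $\mathcal A$ such that $A^\dagger=A$ and $A^{*\dagger}=A^*$. Moreover $X^{\dagger\dagger}=X$ for all $X\in\mathcal A$.
   Context: Let $\mathbb K$ be a field, $d\ge0$, and $\mathcal A$ a $\mathbb K$-algebra isomorphic to $\mathrm{Mat}_{d+1}(\mathbb K)$. A Leonard pair in $\mathcal A$ is an ordered pair $A,A^*\in\mathcal A$ ($A^*$ is notation, not an adjoint) that acts on an irreducible (left) $\mathcal A$-module $V$ as follows: (a) some basis of $V$ makes the matrix of $A$ irreducible tridiagonal (tridiagonal with all sub- and superdiagonal entries nonzero) and the matrix of $A^*$ diagonal, and (b) some basis of $V$ makes the matrix of $A^*$ irreducible tridiagonal and that of $A$ diagonal. An antiautomorphism of $\mathcal A$ is a $\mathbb K$-linear bijection $\gamma:\mathcal A\to\mathcal A$ with $(XY)^\gamma=Y^\gamma X^\gamma$ for all $X,Y$. *)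

theory Defs
  imports "Jordan_Normal_Form.Matrix"
begin

text \<open>The algebra \<A> is realised as Mat_{d+1}(K) = carrier_mat (d+1) (d+1), acting on its
  natural irreducible module V = K^{d+1} (column vectors).\<close>

definition irred_tridiagonal :: "'a::zero mat \<Rightarrow> bool" where
  "irred_tridiagonal T \<longleftrightarrow>
     (\<forall>i<dim_row T. \<forall>j<dim_col T. (i + 1 < j \<or> j + 1 < i) \<longrightarrow> T $$ (i, j) = 0) \<and>
     (\<forall>i. i + 1 < dim_row T \<longrightarrow> T $$ (i + 1, i) \<noteq> 0 \<and> T $$ (i, i + 1) \<noteq> 0)"

text \<open>The matrix of X w.r.t. the basis of K^n given by the columns of an invertible P
  (with inverse Q) is Q * X * P.\<close>

definition leonard_pair :: "nat \<Rightarrow> 'a::field mat \<Rightarrow> 'a mat \<Rightarrow> bool" where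
  "leonard_pair n A As \<longleftrightarrow>
     A \<in> carrier_mat n n \<and> As \<in> carrier_mat n n \<and>
     (\<exists>P Q. P \<in> carrier_mat n n \<and> Q \<in> carrier_mat n n \<and> inverts_mat P Q \<and> inverts_mat Q P \<and>
        irred_tridiagonal (Q * A * P) \<and> diagonal_mat (Q * As * P)) \<and>
     (\<exists>P Q. P \<in> carrier_mat n n \<and> Q \<in> carrier_mat n n \<and> inverts_mat P Q \<and> inverts_mat Q P \<and>
        irred_tridiagonal (Q * As * P) \<and> diagonal_mat (Q * A * P))"

definition antiautomorphism :: "nat \<Rightarrow> ('a::field mat \<Rightarrow> 'a mat) \<Rightarrow> bool" where
  "antiautomorphism n g \<longleftrightarrow>
     bij_betw g (carrier_mat n n) (carrier_mat n n) \<and>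
     (\<forall>X\<in>carrier_mat n n. \<forall>Y\<in>carrier_mat n n. g (X + Y) = g X + g Y) \<and>
     (\<forall>c. \<forall>X\<in>carrier_mat n n. g (c \<cdot>\<^sub>m X) = c \<cdot>\<^sub>m g X) \<and>
     (\<forall>X\<in>carrier_mat n n. \<forall>Y\<in>carrier_mat n n. g (X * Y) = g Y * g X)"

end

theory Submission
  imports Defs
begin
definition dg :: "nat \<Rightarrow> (nat \<Rightarrow> 'a::zero) \<Rightarrow> 'a mat" where
  "dg n f = mat n n (\<lambda>(i,j). if i = j then f i else 0)"

lemma dg_carrier[simp]: "dg n f \<in> carrier_mat n n"
  by (simp add: dg_def)

lemma dg_index: "i < n \<Longrightarrow> j < n \<Longrightarrow> dg n f $$ (i,j) = (if i = j then f i else 0)"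
  by (simp add: dg_def)

lemma dg_mult_left:
  fixes f :: "nat \<Rightarrow> 'a::comm_ring_1"
  assumes "X \<in> carrier_mat n m"
  shows "dg n f * X = mat n m (\<lambda>(i,j). f i * X $$ (i,j))"
  using assms by (intro eq_matI) (auto simp: dg_def scalar_prod_def if_distrib[of "\<lambda>x. x * _"] if_distrib[of "\<lambda>x. _ * x"] sum.delta sum.delta' cong: if_cong)

lemma dg_mult_right:
  fixes f :: "nat \<Rightarrow> 'a::comm_ring_1"
  assumes "X \<in> carrier_mat m n"
  shows "X * dg n f = mat m n (\<lambda>(i,j). X $$ (i,j) * f j)"
  using assms by (intro eq_matI) (auto simp: dg_def scalar_prod_def if_distrib[of "\<lambda>x. x * _"] if_distrib[of "\<lambda>x. _ * x"] sum.delta sum.delta' cong: if_cong)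

lemma dg_mult_dg:
  fixes f :: "nat \<Rightarrow> 'a::comm_ring_1"
  shows "dg n f * dg n g = dg n (\<lambda>i. f i * g i)"
  by (subst dg_mult_left[of _ n n]) (auto simp: dg_def)

definition E :: "nat \<Rightarrow> nat \<Rightarrow> nat \<Rightarrow> 'a::{zero,one} mat" where
  "E n a b = mat n n (\<lambda>(i,j). if i = a \<and> j = b then 1 else 0)"

lemma E_carrier[simp]: "E n a b \<in> carrier_mat n n"
  by (simp add: E_def)

lemma E_mult:
  assumes "a < n" "b < n" "c < n"
  shows "E n a b * E n b c = (E n a c :: 'a::comm_ring_1 mat)"
  using assms by (intro eq_matI) (auto simp: E_def scalar_prod_def if_distrib[of "\<lambda>x. x * _"] if_distrib[of "\<lambda>x. _ * x"] sum.delta sum.delta' cong: if_cong)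

lemma E_diag: "E n i i = dg n (\<lambda>l. if l = i then 1 else 0)"
  by (intro eq_matI) (auto simp: E_def dg_def)

lemma dg_X_dg:
  fixes X :: "'a::comm_ring_1 mat"
  assumes "X \<in> carrier_mat n n" "i < n" "j < n"
  shows "dg n (\<lambda>l. if l = i then 1 else 0) * X * dg n (\<lambda>l. if l = j then 1 else 0) = X $$ (i,j) \<cdot>\<^sub>m E n i j"
  using assms by (subst dg_mult_left[of _ n n], simp, subst dg_mult_right[of _ n n], simp)
     (intro eq_matI, auto simp: E_def)

inductive_set lpgen :: "nat \<Rightarrow> 'a::field mat \<Rightarrow> 'a mat \<Rightarrow> 'a mat set" for n A B where
  g1: "1\<^sub>m n \<in> lpgen n A B"
| gA: "A \<in> lpgen n A B"
| gB: "B \<in> lpgen n A B"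
| gadd: "X \<in> lpgen n A B \<Longrightarrow> Y \<in> lpgen n A B \<Longrightarrow> X + Y \<in> lpgen n A B"
| gsmult: "X \<in> lpgen n A B \<Longrightarrow> c \<cdot>\<^sub>m X \<in> lpgen n A B"
| gmult: "X \<in> lpgen n A B \<Longrightarrow> Y \<in> lpgen n A B \<Longrightarrow> X * Y \<in> lpgen n A B"

lemma lpgen_carrier:
  assumes "A \<in> carrier_mat n n" "B \<in> carrier_mat n n" "X \<in> lpgen n A B"
  shows "X \<in> carrier_mat n n"
  using assms(3) by induction (use assms in auto)

fun Fp :: "'a::field mat \<Rightarrow> (nat \<Rightarrow> 'a) \<Rightarrow> nat \<Rightarrow> nat \<Rightarrow> nat \<Rightarrow> 'a mat" where
  "Fp D d n i 0 = 1\<^sub>m n"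
| "Fp D d n i (Suc k) = (if k = i then Fp D d n i k else Fp D d n i k * (D - d k \<cdot>\<^sub>m 1\<^sub>m n))"

lemma Fp_gen:
  assumes "D \<in> carrier_mat n n"
  shows "Fp D d n i k \<in> lpgen n T D"
proof (induction k)
  case 0 then show ?case by (simp add: lpgen.g1)
next
  case (Suc k)
  have "D - d k \<cdot>\<^sub>m 1\<^sub>m n = D + (- d k) \<cdot>\<^sub>m 1\<^sub>m n"
    using assms by (intro eq_matI) auto
  moreover have "D + (- d k) \<cdot>\<^sub>m 1\<^sub>m n \<in> lpgen n T D"
    by (intro lpgen.gadd lpgen.gsmult lpgen.gB lpgen.g1)
  ultimately show ?case using Suc by (auto intro: lpgen.gmult)
qed

lemma Fp_dg:
  assumes "D = dg n d"
  shows "Fp D d n i k = dg n (\<lambda>l. \<Prod>j\<in>{j. j < k \<and> j \<noteq> i}. (d l - d j))"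
proof (induction k)
  case 0 then show ?case by (intro eq_matI) (auto simp: dg_def)
next
  case (Suc k)
  show ?case
  proof (cases "k = i")
    case True
    then have "{j. j < Suc k \<and> j \<noteq> i} = {j. j < k \<and> j \<noteq> i}" by auto
    then show ?thesis using Suc True by simp
  next
    case False
    then have s: "{j. j < Suc k \<and> j \<noteq> i} = insert k {j. j < k \<and> j \<noteq> i}" by auto
    have "D - d k \<cdot>\<^sub>m 1\<^sub>m n = dg n (\<lambda>l. d l - d k)"
      using assms by (intro eq_matI) (auto simp: dg_def)
    then show ?thesis using Suc False
      by (simp add: s dg_mult_dg mult.commute)
  qed
qed

lemma Ed_gen:
  fixes d :: "nat \<Rightarrow> 'a::field"
  assumes D: "D = dg n d" and dist: "\<forall>a<n. \<forall>b<n. a \<noteq> b \<longrightarrow> d a \<noteq> d b" and i: "i < n"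
  shows "dg n (\<lambda>l. if l = i then 1 else 0) \<in> lpgen n T D"
proof -
  let ?S = "{j. j < n \<and> j \<noteq> i}"
  let ?p = "\<Prod>j\<in>?S. (d i - d j)"
  have fin: "finite ?S" by auto
  have p0: "?p \<noteq> 0" using dist i fin by (subst prod_zero_iff) auto
  have "(1 / ?p) \<cdot>\<^sub>m Fp D d n i n = dg n (\<lambda>l. if l = i then 1 else 0)"
  proof (intro eq_matI)
    fix a b assume ab: "a < dim_row (dg n (\<lambda>l. if l = i then 1 else (0::'a)))"
        "b < dim_col (dg n (\<lambda>l. if l = i then 1 else (0::'a)))"
    then have ab': "a < n" "b < n" by (auto simp: dg_def)
    show "((1 / ?p) \<cdot>\<^sub>m Fp D d n i n) $$ (a, b) = dg n (\<lambda>l. if l = i then 1 else 0) $$ (a, b)"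
    proof (cases "a = i")
      case True
      then show ?thesis using ab' p0 by (cases "b = i") (simp_all add: Fp_dg[OF D] dg_def del: prod_zero_iff)
    next
      case False
      have z: "(\<Prod>j\<in>?S. (d a - d j)) = 0" using fin ab' False by (subst prod_zero_iff) auto
      then show ?thesis using ab' False by (cases "a = b") (simp_all add: Fp_dg[OF D] dg_def z del: prod_zero_iff)
    qed
  qed (auto simp: dg_def Fp_dg[OF D])
  moreover have "(1 / ?p) \<cdot>\<^sub>m Fp D d n i n \<in> lpgen n T D"
    using D by (intro lpgen.gsmult Fp_gen) simp
  ultimately show ?thesis by simp
qed

lemma E_gen_all:
  fixes T D :: "'a::field mat"
  assumes T: "T \<in> carrier_mat n n" "irred_tridiagonal T"
    and D: "D = dg n d" and dist: "\<forall>a<n. \<forall>b<n. a \<noteq> b \<longrightarrow> d a \<noteq> d b"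
  shows "i + k < n \<Longrightarrow> E n i (i + k) \<in> lpgen n T D \<and> E n (i + k) i \<in> lpgen n T D"
proof (induction k arbitrary: i)
  case 0
  then show ?case using Ed_gen[OF D dist, of i] by (simp add: E_diag)
next
  case (Suc k)
  let ?j = "i + k"
  have jn: "?j + 1 < n" using Suc by simp
  have Tne: "T $$ (?j + 1, ?j) \<noteq> 0" "T $$ (?j, ?j + 1) \<noteq> 0"
    using T jn by (auto simp: irred_tridiagonal_def)
  have ed: "dg n (\<lambda>l. if l = a then 1 else 0) \<in> lpgen n T D" if "a < n" for a
    using Ed_gen[OF D dist that] .
  have "E n ?j (?j+1) = (1 / T $$ (?j, ?j + 1)) \<cdot>\<^sub>m (dg n (\<lambda>l. if l = ?j then 1 else 0) * T * dg n (\<lambda>l. if l = ?j+1 then 1 else 0))"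
    using T jn Tne by (subst dg_X_dg) (auto intro!: eq_matI)
  also have "\<dots> \<in> lpgen n T D"
    using jn by (intro lpgen.gsmult lpgen.gmult ed lpgen.gA) auto
  finally have up: "E n ?j (?j+1) \<in> lpgen n T D" .
  have "E n (?j+1) ?j = (1 / T $$ (?j+1, ?j)) \<cdot>\<^sub>m (dg n (\<lambda>l. if l = ?j+1 then 1 else 0) * T * dg n (\<lambda>l. if l = ?j then 1 else 0))"
    using T jn Tne by (subst dg_X_dg) (auto intro!: eq_matI)
  also have "\<dots> \<in> lpgen n T D"
    using jn by (intro lpgen.gsmult lpgen.gmult ed lpgen.gA) auto
  finally have down: "E n (?j+1) ?j \<in> lpgen n T D" .
  have ih: "E n i ?j \<in> lpgen n T D" "E n ?j i \<in> lpgen n T D" using Suc by auto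
  have "E n i (?j+1) = (E n i ?j * E n ?j (?j+1) :: 'a mat)"
    by (rule E_mult[symmetric, of i n ?j "?j+1"]) (use jn in auto)
  moreover have "E n (?j+1) i = (E n (?j+1) ?j * E n ?j i :: 'a mat)"
    by (rule E_mult[symmetric, of "?j+1" n ?j i]) (use jn in auto)
  ultimately show ?case using ih up down by (auto intro: lpgen.gmult)
qed

lemma E_gen:
  fixes T D :: "'a::field mat"
  assumes T: "T \<in> carrier_mat n n" "irred_tridiagonal T"
    and D: "D = dg n d" and dist: "\<forall>a<n. \<forall>b<n. a \<noteq> b \<longrightarrow> d a \<noteq> d b"
    and ab: "a < n" "b < n"
  shows "E n a b \<in> lpgen n T D"
proof (cases "a \<le> b")
  case True
  then show ?thesis using E_gen_all[OF T D dist, of a "b - a"] ab by simp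
next
  case False
  then show ?thesis using E_gen_all[OF T D dist, of b "a - b"] ab by simp
qed

lemma divmod_aux:
  fixes a b k n :: nat
  assumes "b < n"
  shows "(a * n + b = k) \<longleftrightarrow> (a = k div n \<and> b = k mod n)"
  using assms by (auto simp: div_mult_mod_eq) (metis add.commute div_mult_mod_eq)?

lemma gen_full:
  fixes T D :: "'a::field mat"
  assumes T: "T \<in> carrier_mat n n" "irred_tridiagonal T"
    and D: "D = dg n d" and dist: "\<forall>a<n. \<forall>b<n. a \<noteq> b \<longrightarrow> d a \<noteq> d b"
    and Z: "Z \<in> carrier_mat n n"
  shows "Z \<in> lpgen n T D"
proof -
  define S where "S k = mat n n (\<lambda>(a,b). if a * n + b < k then Z $$ (a,b) else 0)" for k
  have "k \<le> n * n \<Longrightarrow> S k \<in> lpgen n T D" for k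
  proof (induction k)
    case 0
    have "S 0 = 0 \<cdot>\<^sub>m 1\<^sub>m n" by (intro eq_matI) (auto simp: S_def)
    then show ?case by (simp add: lpgen.gsmult lpgen.g1)
  next
    case (Suc k)
    have kn: "k < n * n" using Suc by simp
    have pos: "n > 0" using kn by (cases n) auto
    have a: "k div n < n" using kn by (simp add: less_mult_imp_div_less)
    have b: "k mod n < n" using pos by simp
    have "S (Suc k) = S k + Z $$ (k div n, k mod n) \<cdot>\<^sub>m E n (k div n) (k mod n)"
    proof (intro eq_matI)
      fix i j assume ij: "i < dim_row (S k + Z $$ (k div n, k mod n) \<cdot>\<^sub>m E n (k div n) (k mod n))"
        "j < dim_col (S k + Z $$ (k div n, k mod n) \<cdot>\<^sub>m E n (k div n) (k mod n))"
      then have ij': "i < n" "j < n" by (auto simp: S_def E_def)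
      have "(i * n + j < Suc k) = (i * n + j < k \<or> i * n + j = k)" by auto
      then show "S (Suc k) $$ (i, j) = (S k + Z $$ (k div n, k mod n) \<cdot>\<^sub>m E n (k div n) (k mod n)) $$ (i, j)"
        using ij' divmod_aux[of j n i k] by (auto simp: S_def E_def)
    qed (auto simp: S_def E_def)
    then show ?case using Suc kn E_gen[OF T D dist a b] by (auto intro: lpgen.gadd lpgen.gsmult)
  qed
  moreover have "S (n * n) = Z"
  proof (intro eq_matI)
    fix i j assume "i < dim_row Z" "j < dim_col Z"
    then have ij: "i < n" "j < n" using Z by auto
    have "i * n + j < i * n + n" using ij by simp
    also have "\<dots> = (i + 1) * n" by simp
    also have "\<dots> \<le> n * n" using ij by (intro mult_le_mono1) simp
    finally show "S (n * n) $$ (i, j) = Z $$ (i, j)" using ij by (simp add: S_def)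
  qed (use Z in \<open>auto simp: S_def\<close>)
  ultimately show ?thesis by auto
qed

lemma sq_mult[simp]: "A \<in> carrier_mat n n \<Longrightarrow> B \<in> carrier_mat n n \<Longrightarrow> A * B \<in> carrier_mat n n"
  by simp

lemma lpgen_conj:
  fixes A B P Q :: "'a::field mat"
  assumes c: "A \<in> carrier_mat n n" "B \<in> carrier_mat n n" "P \<in> carrier_mat n n" "Q \<in> carrier_mat n n"
    and PQ: "P * Q = 1\<^sub>m n" and QP: "Q * P = 1\<^sub>m n"
    and Y: "Y \<in> lpgen n (Q * A * P) (Q * B * P)"
  shows "P * Y * Q \<in> lpgen n A B"
  using Y
proof induction
  case g1
  then show ?case using c PQ by (simp add: lpgen.g1)
next
  case gA
  have "P * (Q * A * P) * Q = (P * Q) * A * (P * Q)" using c by (simp add: assoc_mult_mat[of _ n n _ n _ n])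
  then show ?case using c PQ by (simp add: lpgen.gA)
next
  case gB
  have "P * (Q * B * P) * Q = (P * Q) * B * (P * Q)" using c by (simp add: assoc_mult_mat[of _ n n _ n _ n])
  then show ?case using c PQ by (simp add: lpgen.gB)
next
  case (gadd X Y)
  have cx: "X \<in> carrier_mat n n" "Y \<in> carrier_mat n n"
    using lpgen_carrier[of "Q * A * P" n "Q * B * P"] gadd c by auto
  have "P * (X + Y) * Q = P * X * Q + P * Y * Q"
    using c cx by (simp add: mult_add_distrib_mat[of _ n n] add_mult_distrib_mat[of _ n n])
  then show ?case using gadd by (simp add: lpgen.gadd)
next
  case (gsmult X a)
  have cx: "X \<in> carrier_mat n n"
    using lpgen_carrier[of "Q * A * P" n "Q * B * P"] gsmult c by auto
  have "P * (a \<cdot>\<^sub>m X) * Q = a \<cdot>\<^sub>m (P * X * Q)"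
    using c cx by (simp add: mult_smult_distrib[of _ n n] mult_smult_assoc_mat[of _ n n])
  then show ?case using gsmult by (simp add: lpgen.gsmult)
next
  case (gmult X Y)
  have cx: "X \<in> carrier_mat n n" "Y \<in> carrier_mat n n"
    using lpgen_carrier[of "Q * A * P" n "Q * B * P"] gmult c by auto
  have "P * (X * Y) * Q = P * X * (Q * P) * Y * Q"
    using c cx QP by (simp add: assoc_mult_mat[of _ n n _ n _ n])
  also have "\<dots> = (P * X * Q) * (P * Y * Q)" using c cx by (simp add: assoc_mult_mat[of _ n n _ n _ n])
  finally show ?case using gmult by (simp add: lpgen.gmult)
qed

lemma anti_carrier:
  assumes "antiautomorphism n h" "X \<in> carrier_mat n n"
  shows "h X \<in> carrier_mat n n"
  using assms unfolding antiautomorphism_def by (meson bij_betw_apply)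

lemma anti_one:
  fixes h :: "'a::field mat \<Rightarrow> 'a mat"
  assumes h: "antiautomorphism n h"
  shows "h (1\<^sub>m n) = 1\<^sub>m n"
proof -
  obtain X0 where X0: "X0 \<in> carrier_mat n n" "h X0 = 1\<^sub>m n"
    using h unfolding antiautomorphism_def bij_betw_def
    by (metis imageE one_carrier_mat)
  have "h X0 = h (X0 * 1\<^sub>m n)" using X0 by simp
  also have "\<dots> = h (1\<^sub>m n) * h X0" using h X0(1) one_carrier_mat unfolding antiautomorphism_def by blast
  finally have "h X0 = h (1\<^sub>m n) * h X0" .
  then have "1\<^sub>m n = h (1\<^sub>m n) * 1\<^sub>m n" unfolding X0(2) .
  then show ?thesis using anti_carrier[OF h one_carrier_mat] by simp
qed

lemma anti_agree:
  fixes h g :: "'a::field mat \<Rightarrow> 'a mat"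
  assumes h: "antiautomorphism n h" and g: "antiautomorphism n g"
    and c: "A \<in> carrier_mat n n" "B \<in> carrier_mat n n"
    and hA: "h A = g A" and hB: "h B = g B"
    and X: "X \<in> lpgen n A B"
  shows "h X = g X"
  using X
proof induction
  case g1 then show ?case using anti_one[OF h] anti_one[OF g] by simp
next
  case gA then show ?case using hA by simp
next
  case gB then show ?case using hB by simp
next
  case (gadd X Y)
  then have "X \<in> carrier_mat n n" "Y \<in> carrier_mat n n" using lpgen_carrier c by auto
  then show ?case using gadd h g unfolding antiautomorphism_def by simp
next
  case (gsmult X a)
  then have "X \<in> carrier_mat n n" using lpgen_carrier c by auto
  then show ?case using gsmult h g unfolding antiautomorphism_def by simp
next
  case (gmult X Y)
  then have "X \<in> carrier_mat n n" "Y \<in> carrier_mat n n" using lpgen_carrier c by auto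
  then show ?case using gmult h g unfolding antiautomorphism_def by simp
qed

lemma inv_cancel:
  fixes P Q X :: "'a::field mat"
  assumes "P * Q = 1\<^sub>m n" "P \<in> carrier_mat n n" "Q \<in> carrier_mat n n" "X \<in> carrier_mat n m"
  shows "P * (Q * X) = X"
proof -
  have "P * (Q * X) = (P * Q) * X" using assoc_mult_mat[OF assms(2,3,4)] by simp
  then show ?thesis using left_mult_one_mat[OF assms(4)] assms by simp
qed

lemma tri_kernel:
  fixes M :: "'a::field mat"
  assumes M: "M \<in> carrier_mat n n" "irred_tridiagonal M"
    and x: "x \<in> carrier_vec n" "M *\<^sub>v x = 0\<^sub>v n" and x0: "x $ 0 = 0"
  shows "x = 0\<^sub>v n"
proof -
  have "\<forall>j\<le>r. j < n \<longrightarrow> x $ j = 0" for r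
  proof (induction r)
    case 0 then show ?case using x0 by auto
  next
    case (Suc r)
    show ?case
    proof (intro allI impI)
      fix j assume j: "j \<le> Suc r" "j < n"
      show "x $ j = 0"
      proof (cases "j \<le> r")
        case True then show ?thesis using Suc j by auto
      next
        case False
        then have jr: "j = r + 1" using j by auto
        have rn: "r + 1 < n" using j jr by simp
        let ?f = "\<lambda>k. M $$ (r,k) * x $ k"
        have "0 = (M *\<^sub>v x) $ r" using x rn by simp
        also have "\<dots> = (\<Sum>k\<in>{0..<n}. ?f k)"
          using M x(1) rn by (simp add: scalar_prod_def)
        also have "\<dots> = ?f (r+1) + (\<Sum>k\<in>{0..<n}-{r+1}. ?f k)"
          by (rule sum.remove) (use rn in auto)
        also have "(\<Sum>k\<in>{0..<n}-{r+1}. ?f k) = 0"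
        proof (rule sum.neutral, intro ballI)
          fix k assume k: "k \<in> {0..<n} - {r+1}"
          show "?f k = 0"
          proof (cases "k \<le> r")
            case True then show ?thesis using Suc k by auto
          next
            case False
            then have "r + 1 < k" using k by auto
            then have "M $$ (r,k) = 0" using M k rn unfolding irred_tridiagonal_def by auto
            then show ?thesis by simp
          qed
        qed
        finally have "M $$ (r, r+1) * x $ (r+1) = 0" by simp
        moreover have "M $$ (r, r+1) \<noteq> 0" using M rn unfolding irred_tridiagonal_def by auto
        ultimately show ?thesis using jr by simp
      qed
    qed
  qed
  then show ?thesis using x by (intro eq_vecI) auto
qed

lemma diag_shift_kernel:
  fixes D :: "'a::field mat"
  assumes D: "D \<in> carrier_mat n n" "diagonal_mat D" and y: "y \<in> carrier_vec n"
    and yz: "\<forall>k<n. D $$ (k,k) \<noteq> lam \<longrightarrow> y $ k = 0"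
  shows "(D - lam \<cdot>\<^sub>m 1\<^sub>m n) *\<^sub>v y = 0\<^sub>v n"
proof (intro eq_vecI)
  fix i assume "i < dim_vec (0\<^sub>v n :: 'a vec)"
  then have i: "i < n" by simp
  have "((D - lam \<cdot>\<^sub>m 1\<^sub>m n) *\<^sub>v y) $ i = (\<Sum>k\<in>{0..<n}. (D - lam \<cdot>\<^sub>m 1\<^sub>m n) $$ (i,k) * y $ k)"
    using D y i by (simp add: scalar_prod_def)
  also have "\<dots> = 0"
  proof (rule sum.neutral, intro ballI)
    fix k assume k: "k \<in> {0..<n}"
    show "(D - lam \<cdot>\<^sub>m 1\<^sub>m n) $$ (i,k) * y $ k = 0"
    proof (cases "k = i")
      case True
      then show ?thesis using yz k D i by auto
    next
      case False
      then show ?thesis using D k i unfolding diagonal_mat_def by auto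
    qed
  qed
  finally show "((D - lam \<cdot>\<^sub>m 1\<^sub>m n) *\<^sub>v y) $ i = 0\<^sub>v n $ i" using i by simp
qed (use D in auto)

lemma distinct_diag:
  fixes As :: "'a::field mat"
  assumes As: "As \<in> carrier_mat n n"
    and c1: "P1 \<in> carrier_mat n n" "Q1 \<in> carrier_mat n n" "P1 * Q1 = 1\<^sub>m n" "Q1 * P1 = 1\<^sub>m n"
    and diag: "diagonal_mat (Q1 * As * P1)"
    and c2: "P2 \<in> carrier_mat n n" "Q2 \<in> carrier_mat n n" "P2 * Q2 = 1\<^sub>m n" "Q2 * P2 = 1\<^sub>m n"
    and tri: "irred_tridiagonal (Q2 * As * P2)"
    and ab: "a < n" "b < n" "a \<noteq> b"
  shows "(Q1 * As * P1) $$ (a,a) \<noteq> (Q1 * As * P1) $$ (b,b)"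
proof
  assume eq: "(Q1 * As * P1) $$ (a,a) = (Q1 * As * P1) $$ (b,b)"
  define D where "D = Q1 * As * P1"
  define lam where "lam = D $$ (a,a)"
  define M where "M = Q2 * As * P2 - lam \<cdot>\<^sub>m 1\<^sub>m n"
  define N where "N = Q2 * P1"
  define N' where "N' = Q1 * P2"
  have cD: "D \<in> carrier_mat n n" and cM: "M \<in> carrier_mat n n" and cN: "N \<in> carrier_mat n n"
    and cN': "N' \<in> carrier_mat n n"
    using As c1 c2 by (auto simp: D_def M_def N_def N'_def)
  have dD: "diagonal_mat D" using diag D_def by simp
  have triM: "irred_tridiagonal M"
    using tri As c1 c2 unfolding M_def irred_tridiagonal_def by auto
  have NN': "N' * N = 1\<^sub>m n"
  proof -
    show ?thesis using c1 c2
      by (simp add: N_def N'_def inv_cancel[where P=P2 and Q=Q2 and n=n and m=n] assoc_mult_mat[of _ n n _ n _ n])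
  qed
  have MN: "M * N = N * (D - lam \<cdot>\<^sub>m 1\<^sub>m n)"
  proof -
    have "M * N = Q2 * As * P2 * N - lam \<cdot>\<^sub>m N"
      unfolding M_def using As c1 c2 cN
      by (simp add: minus_mult_distrib_mat[of _ n n _ _ n] mult_smult_assoc_mat[of _ n n _ n])
    also have "Q2 * As * P2 * N = Q2 * As * P1" unfolding N_def using As c1 c2 by (simp add: assoc_mult_mat[of _ n n _ n _ n] inv_cancel[where P=P2 and Q=Q2 and n=n and m=n])
    finally have 1: "M * N = Q2 * As * P1 - lam \<cdot>\<^sub>m N" .
    have "N * (D - lam \<cdot>\<^sub>m 1\<^sub>m n) = N * D - lam \<cdot>\<^sub>m N"
      using cN cD by (simp add: mult_minus_distrib_mat[of _ n n _ n] mult_smult_distrib[of _ n n _ n])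
    also have "N * D = Q2 * As * P1" unfolding N_def D_def using As c1 c2 by (simp add: assoc_mult_mat[of _ n n _ n _ n] inv_cancel[where P=P1 and Q=Q1 and n=n and m=n])
    finally show ?thesis using 1 by simp
  qed
  have ker: "M *\<^sub>v (N *\<^sub>v y) = 0\<^sub>v n"
    if y: "y \<in> carrier_vec n" "\<forall>k<n. D $$ (k,k) \<noteq> lam \<longrightarrow> y $ k = 0" for y
  proof -
    have "M *\<^sub>v (N *\<^sub>v y) = (M * N) *\<^sub>v y" by (rule assoc_mult_mat_vec[of _ n n _ n, symmetric]) (use cM cN y(1) in auto)
    also have "\<dots> = N *\<^sub>v ((D - lam \<cdot>\<^sub>m 1\<^sub>m n) *\<^sub>v y)" unfolding MN by (rule assoc_mult_mat_vec[of _ n n _ n]) (use cN cD y(1) in auto)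
    also have "(D - lam \<cdot>\<^sub>m 1\<^sub>m n) *\<^sub>v y = 0\<^sub>v n" by (rule diag_shift_kernel[OF cD dD y(1) y(2)])
    also have "N *\<^sub>v 0\<^sub>v n = 0\<^sub>v n" using cN by (intro eq_vecI) auto
    finally show ?thesis .
  qed
  have bk: "N' *\<^sub>v (N *\<^sub>v y) = y" if "y \<in> carrier_vec n" for y
  proof -
    have "N' *\<^sub>v (N *\<^sub>v y) = (N' * N) *\<^sub>v y" by (rule assoc_mult_mat_vec[of _ n n _ n, symmetric]) (use cN' cN that in auto)
    then show ?thesis using NN' that by simp
  qed
  have Nv0: "(N *\<^sub>v y) $ 0 = (\<Sum>k\<in>{0..<n}. N $$ (0,k) * y $ k)" if "y \<in> carrier_vec n" for y
    using cN that ab by (simp add: scalar_prod_def)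
  define al where "al = N $$ (0,b)"
  define be where "be = N $$ (0,a)"
  define y where "y = vec n (\<lambda>k. if k = a then al else if k = b then - be else 0)"
  have cy: "y \<in> carrier_vec n" by (simp add: y_def)
  have yz: "\<forall>k<n. D $$ (k,k) \<noteq> lam \<longrightarrow> y $ k = 0"
    using eq by (auto simp: y_def lam_def D_def)
  have "(\<Sum>k\<in>{0..<n}. N $$ (0,k) * y $ k) = (\<Sum>k\<in>{a,b}. N $$ (0,k) * y $ k)"
    by (rule sum.mono_neutral_right) (use ab in \<open>auto simp: y_def\<close>)
  also have "\<dots> = 0" using ab by (simp add: y_def al_def be_def)
  finally have "(N *\<^sub>v y) $ 0 = 0" using Nv0[OF cy] by simp
  then have "N *\<^sub>v y = 0\<^sub>v n"
    using tri_kernel[OF cM triM _ ker[OF cy yz]] cN cy by simp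
  then have yN: "N *\<^sub>v y = 0\<^sub>v n" .
  have "y = N' *\<^sub>v (N *\<^sub>v y)" using bk[OF cy] by simp
  also have "\<dots> = N' *\<^sub>v 0\<^sub>v n" unfolding yN ..
  also have "\<dots> = 0\<^sub>v n" using cN' by (intro eq_vecI) auto
  finally have y0: "y = 0\<^sub>v n" .
  have "y $ b = - be" using ab by (simp add: y_def)
  then have be0: "be = 0" using y0 ab by simp
  define x :: "'a vec" where "x = unit_vec n a"
  have cx: "x \<in> carrier_vec n" by (simp add: x_def)
  have xz: "\<forall>k<n. D $$ (k,k) \<noteq> lam \<longrightarrow> x $ k = 0"
    by (auto simp: x_def lam_def unit_vec_def)
  have "(\<Sum>k\<in>{0..<n}. N $$ (0,k) * x $ k) = (\<Sum>k\<in>{a}. N $$ (0,k) * x $ k)"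
    by (rule sum.mono_neutral_right) (use ab in \<open>auto simp: x_def\<close>)
  also have "\<dots> = be" using ab by (simp add: x_def be_def)
  finally have "(N *\<^sub>v x) $ 0 = 0" using Nv0[OF cx] be0 by simp
  then have "N *\<^sub>v x = 0\<^sub>v n"
    using tri_kernel[OF cM triM _ ker[OF cx xz]] cN cx by simp
  then have "x = N' *\<^sub>v 0\<^sub>v n" using bk[OF cx] by simp
  also have "\<dots> = 0\<^sub>v n" using cN' by (intro eq_vecI) auto
  finally have "x $ a = 0" using ab by simp
  moreover have "x $ a = 1" using ab by (simp add: x_def)
  ultimately show False by simp
qed

fun mseq :: "'a::field mat \<Rightarrow> nat \<Rightarrow> 'a" where
  "mseq T 0 = 1"
| "mseq T (Suc i) = mseq T i * T $$ (Suc i, i) / T $$ (i, Suc i)"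

lemma mseq_nz:
  assumes T: "T \<in> carrier_mat n n" "irred_tridiagonal T" and i: "i < n"
  shows "mseq T i \<noteq> 0"
  using i
proof (induction i)
  case 0 then show ?case by simp
next
  case (Suc i)
  have "T $$ (Suc i, i) \<noteq> 0" "T $$ (i, Suc i) \<noteq> 0"
    using T Suc.prems unfolding irred_tridiagonal_def by auto
  then show ?case using Suc by simp
qed

lemma mseq_sym:
  assumes T: "T \<in> carrier_mat n n" "irred_tridiagonal T" and ij: "i < n" "j < n"
  shows "mseq T i * T $$ (j,i) = T $$ (i,j) * mseq T j"
proof -
  consider "j = Suc i" | "i = Suc j" | "i = j" | "i + 1 < j \<or> j + 1 < i" by linarith
  then show ?thesis
  proof cases
    case 1
    have "T $$ (i, Suc i) \<noteq> 0" using T ij 1 unfolding irred_tridiagonal_def by auto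
    then show ?thesis using 1 by simp
  next
    case 2
    have "T $$ (j, Suc j) \<noteq> 0" using T ij 2 unfolding irred_tridiagonal_def by auto
    then show ?thesis using 2 by simp
  next
    case 3 then show ?thesis by simp
  next
    case 4
    then have "T $$ (j,i) = 0" "T $$ (i,j) = 0" using T ij unfolding irred_tridiagonal_def by auto
    then show ?thesis by simp
  qed
qed

definition tau :: "nat \<Rightarrow> 'a::field mat \<Rightarrow> 'a mat \<Rightarrow> 'a mat" where
  "tau n T Y = mat n n (\<lambda>(i,j). mseq T i * Y $$ (j,i) / mseq T j)"

lemma tau_carrier[simp]: "tau n T Y \<in> carrier_mat n n"
  by (simp add: tau_def)

lemma tau_add:
  assumes "Y \<in> carrier_mat n n" "Z \<in> carrier_mat n n"
  shows "tau n T (Y + Z) = tau n T Y + tau n T Z"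
  using assms by (intro eq_matI) (auto simp: tau_def distrib_left add_divide_distrib)

lemma tau_smult:
  assumes "Y \<in> carrier_mat n n"
  shows "tau n T (c \<cdot>\<^sub>m Y) = c \<cdot>\<^sub>m tau n T Y"
  using assms by (intro eq_matI) (auto simp: tau_def field_simps)

lemma tau_invol:
  assumes T: "T \<in> carrier_mat n n" "irred_tridiagonal T" and Y: "Y \<in> carrier_mat n n"
  shows "tau n T (tau n T Y) = Y"
proof (intro eq_matI)
  fix i j assume "i < dim_row Y" "j < dim_col Y"
  then have ij: "i < n" "j < n" using Y by auto
  then have "mseq T i \<noteq> 0" "mseq T j \<noteq> 0" using mseq_nz[OF T] by auto
  then show "tau n T (tau n T Y) $$ (i, j) = Y $$ (i, j)" using ij by (simp add: tau_def)
qed (use Y in \<open>auto simp: tau_def\<close>)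

lemma tau_T:
  assumes T: "T \<in> carrier_mat n n" "irred_tridiagonal T"
  shows "tau n T T = T"
proof (intro eq_matI)
  fix i j assume "i < dim_row T" "j < dim_col T"
  then have ij: "i < n" "j < n" using T by auto
  then have "mseq T j \<noteq> 0" using mseq_nz[OF T] by auto
  then show "tau n T T $$ (i, j) = T $$ (i, j)" using ij mseq_sym[OF T ij] by (simp add: tau_def)
qed (use T in \<open>auto simp: tau_def\<close>)

lemma tau_D:
  assumes T: "T \<in> carrier_mat n n" "irred_tridiagonal T" and D: "D \<in> carrier_mat n n" "diagonal_mat D"
  shows "tau n T D = D"
proof (intro eq_matI)
  fix i j assume "i < dim_row D" "j < dim_col D"
  then have ij: "i < n" "j < n" using D by auto
  then have "mseq T j \<noteq> 0" using mseq_nz[OF T] by auto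
  then show "tau n T D $$ (i, j) = D $$ (i, j)" using ij D unfolding diagonal_mat_def
    by (cases "i = j") (auto simp: tau_def)
qed (use D in \<open>auto simp: tau_def\<close>)

lemma tau_mult:
  assumes T: "T \<in> carrier_mat n n" "irred_tridiagonal T"
    and Y: "Y \<in> carrier_mat n n" and Z: "Z \<in> carrier_mat n n"
  shows "tau n T (Y * Z) = tau n T Z * tau n T Y"
proof (intro eq_matI)
  fix i j assume "i < dim_row (tau n T Z * tau n T Y)" "j < dim_col (tau n T Z * tau n T Y)"
  then have ij: "i < n" "j < n" by (auto simp: tau_def)
  have nz: "k < n \<Longrightarrow> mseq T k \<noteq> 0" for k using mseq_nz[OF T] by auto
  have "tau n T (Y * Z) $$ (i, j) = mseq T i * (\<Sum>k\<in>{0..<n}. Y $$ (j,k) * Z $$ (k,i)) / mseq T j"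
    using ij Y Z by (simp add: tau_def scalar_prod_def)
  also have "\<dots> = (\<Sum>k\<in>{0..<n}. (mseq T i * Z $$ (k,i) / mseq T k) * (mseq T k * Y $$ (j,k) / mseq T j))"
    unfolding sum_distrib_left sum_divide_distrib
    by (rule sum.cong) (use nz in \<open>auto simp: field_simps\<close>)
  also have "\<dots> = (tau n T Z * tau n T Y) $$ (i, j)"
    using ij by (simp add: tau_def scalar_prod_def)
  finally show "tau n T (Y * Z) $$ (i, j) = (tau n T Z * tau n T Y) $$ (i, j)" .
qed (auto simp: tau_def)

lemma conj_mult:
  fixes P Q X Y :: "'a::field mat"
  assumes c: "P \<in> carrier_mat n n" "Q \<in> carrier_mat n n" "X \<in> carrier_mat n n" "Y \<in> carrier_mat n n"
    and PQ: "P * Q = 1\<^sub>m n"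
  shows "Q * (X * Y) * P = (Q * X * P) * (Q * Y * P)"
  using c PQ by (simp add: assoc_mult_mat[of _ n n _ n _ n] inv_cancel[where P=P and Q=Q and n=n and m=n])

lemma conj_add:
  fixes P Q X Y :: "'a::field mat"
  assumes c: "P \<in> carrier_mat n n" "Q \<in> carrier_mat n n" "X \<in> carrier_mat n n" "Y \<in> carrier_mat n n"
  shows "Q * (X + Y) * P = Q * X * P + Q * Y * P"
  using c by (simp add: mult_add_distrib_mat[of _ n n] add_mult_distrib_mat[of _ n n])

lemma conj_smult:
  fixes P Q X :: "'a::field mat"
  assumes c: "P \<in> carrier_mat n n" "Q \<in> carrier_mat n n" "X \<in> carrier_mat n n"
  shows "Q * (a \<cdot>\<^sub>m X) * P = a \<cdot>\<^sub>m (Q * X * P)"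
  using c by (simp add: mult_smult_distrib[of _ n n] mult_smult_assoc_mat[of _ n n])

lemma conj_cancel:
  fixes P Q W :: "'a::field mat"
  assumes c: "P \<in> carrier_mat n n" "Q \<in> carrier_mat n n" "W \<in> carrier_mat n n"
    and QP: "Q * P = 1\<^sub>m n"
  shows "Q * (P * W * Q) * P = W"
proof -
  have "Q * (P * W * Q) * P = (Q * P) * W * (Q * P)"
    using c by (simp add: assoc_mult_mat[of _ n n _ n _ n])
  then show ?thesis using QP c by simp
qed

lemma main_exists:
  fixes A As :: "'a::field mat"
  assumes lp: "leonard_pair n A As"
  shows "\<exists>g. antiautomorphism n g \<and> g A = A \<and> g As = As \<and>
            (\<forall>h. antiautomorphism n h \<and> h A = A \<and> h As = As \<longrightarrow>
                 (\<forall>X\<in>carrier_mat n n. h X = g X)) \<and>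
            (\<forall>X\<in>carrier_mat n n. g (g X) = X)"
proof -
  have cA: "A \<in> carrier_mat n n" and cAs: "As \<in> carrier_mat n n"
    using lp unfolding leonard_pair_def by auto
  obtain P Q where PQ: "P \<in> carrier_mat n n" "Q \<in> carrier_mat n n" "inverts_mat P Q" "inverts_mat Q P"
     and triT: "irred_tridiagonal (Q * A * P)" and diagD: "diagonal_mat (Q * As * P)"
    using lp unfolding leonard_pair_def by blast
  obtain P2 Q2 where PQ2: "P2 \<in> carrier_mat n n" "Q2 \<in> carrier_mat n n" "inverts_mat P2 Q2" "inverts_mat Q2 P2"
     and tri2: "irred_tridiagonal (Q2 * As * P2)"
    using lp unfolding leonard_pair_def by blast
  have pq: "P * Q = 1\<^sub>m n" "Q * P = 1\<^sub>m n" using PQ unfolding inverts_mat_def by auto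
  have pq2: "P2 * Q2 = 1\<^sub>m n" "Q2 * P2 = 1\<^sub>m n" using PQ2 unfolding inverts_mat_def by auto
  define T where "T = Q * A * P"
  define D where "D = Q * As * P"
  have cT: "T \<in> carrier_mat n n" and cD: "D \<in> carrier_mat n n"
    using PQ cA cAs by (auto simp: T_def D_def)
  have tT: "irred_tridiagonal T" using triT T_def by simp
  have dD: "diagonal_mat D" using diagD D_def by simp
  define g where "g X = P * tau n T (Q * X * P) * Q" for X
  have cQXP: "Q * X * P \<in> carrier_mat n n" if "X \<in> carrier_mat n n" for X
    using PQ that by simp
  have gc: "g X \<in> carrier_mat n n" for X using PQ by (simp add: g_def)
  have gg: "g (g X) = X" if X: "X \<in> carrier_mat n n" for X
  proof -
    have "g (g X) = P * tau n T (tau n T (Q * X * P)) * Q"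
      unfolding g_def using conj_cancel[OF PQ(1,2) tau_carrier pq(2)] by simp
    also have "\<dots> = P * (Q * X * P) * Q" using tau_invol[OF cT tT cQXP[OF X]] by simp
    also have "\<dots> = X" using conj_cancel[OF PQ(2,1) X pq(1)] by simp
    finally show ?thesis .
  qed
  have ganti: "antiautomorphism n g"
    unfolding antiautomorphism_def
  proof (intro conjI ballI allI)
    show "bij_betw g (carrier_mat n n) (carrier_mat n n)"
      by (rule bij_betwI[of g _ _ g]) (use gc gg in auto)
  next
    fix X Y :: "'a mat" assume X: "X \<in> carrier_mat n n" and Y: "Y \<in> carrier_mat n n"
    show "g (X + Y) = g X + g Y"
      unfolding g_def using X Y PQ
      by (simp add: conj_add[of P n Q] tau_add conj_add[of Q n P "tau n T _"])
  next
    fix c and X :: "'a mat" assume X: "X \<in> carrier_mat n n"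
    show "g (c \<cdot>\<^sub>m X) = c \<cdot>\<^sub>m g X"
      unfolding g_def using X PQ
      by (simp add: conj_smult[of P n Q] tau_smult conj_smult[of Q n P "tau n T _"])
  next
    fix X Y :: "'a mat" assume X: "X \<in> carrier_mat n n" and Y: "Y \<in> carrier_mat n n"
    have "g (X * Y) = P * tau n T ((Q * X * P) * (Q * Y * P)) * Q"
      unfolding g_def using conj_mult[OF PQ(1,2) X Y pq(1)] by simp
    also have "\<dots> = P * (tau n T (Q * Y * P) * tau n T (Q * X * P)) * Q"
      using tau_mult[OF cT tT cQXP[OF X] cQXP[OF Y]] by simp
    also have "\<dots> = g Y * g X"
      unfolding g_def using conj_mult[OF PQ(2,1) tau_carrier tau_carrier pq(2)] by simp
    finally show "g (X * Y) = g Y * g X" .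
  qed
  have gA: "g A = A"
  proof -
    have "g A = P * T * Q" unfolding g_def T_def[symmetric] using tau_T[OF cT tT] by simp
    also have "\<dots> = A" unfolding T_def using conj_cancel[OF PQ(2,1) cA pq(1)] by simp
    finally show ?thesis .
  qed
  have gAs: "g As = As"
  proof -
    have "g As = P * D * Q" unfolding g_def D_def[symmetric] using tau_D[OF cT tT cD dD] by simp
    also have "\<dots> = As" unfolding D_def using conj_cancel[OF PQ(2,1) cAs pq(1)] by simp
    finally show ?thesis .
  qed
  have dist: "\<forall>a<n. \<forall>b<n. a \<noteq> b \<longrightarrow> D $$ (a,a) \<noteq> D $$ (b,b)"
    unfolding D_def using distinct_diag[OF cAs PQ(1,2) pq diagD PQ2(1,2) pq2 tri2] by blast
  have Ddg: "D = dg n (\<lambda>i. D $$ (i,i))"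
    using cD dD unfolding diagonal_mat_def by (intro eq_matI) (auto simp: dg_def)
  have full: "X \<in> lpgen n A As" if X: "X \<in> carrier_mat n n" for X
  proof -
    have "Q * X * P \<in> lpgen n T D"
      using gen_full[OF cT tT Ddg dist cQXP[OF X]] .
    then have "P * (Q * X * P) * Q \<in> lpgen n A As"
      using lpgen_conj[OF cA cAs PQ(1,2) pq] unfolding T_def D_def by blast
    then show ?thesis using conj_cancel[OF PQ(2,1) X pq(1)] by simp
  qed
  have uniq: "\<forall>X\<in>carrier_mat n n. h X = g X"
    if h: "antiautomorphism n h" "h A = A" "h As = As" for h
    using anti_agree[OF h(1) ganti cA cAs] h gA gAs full by auto
  show ?thesis using ganti gA gAs uniq gg by blast
qed

theorem theorem6p1:
  fixes d :: nat and A As :: "'a::field mat"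
  assumes "leonard_pair (d + 1) A As"
  shows "\<exists>g. antiautomorphism (d + 1) g \<and> g A = A \<and> g As = As \<and>
            (\<forall>h. antiautomorphism (d + 1) h \<and> h A = A \<and> h As = As \<longrightarrow>
                 (\<forall>X\<in>carrier_mat (d + 1) (d + 1). h X = g X)) \<and>
            (\<forall>X\<in>carrier_mat (d + 1) (d + 1). g (g X) = X)"
  using main_exists[OF assms] .

end
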